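(* In the setting of the context, if $\pi_\alpha\to0$ as $n\to\infty$, then $\widehat\pi_{uc}=n^{-1}\sum_{i=1}^n\delta_i\xrightarrow{\mathbb{P}}\pi_{uc}$.
   Context: For each $n$ we observe $(Y_i,X_i,\delta_i)$, $i=1,\dots,n$, with $T_i=X_i^\top\beta+\alpha_i+\xi_i$, $Y_i=\min(T_i,C_i)$, $\delta_i=\mathbb{1}\{T_i\le C_i\}$; $\{C_i,X_i,\xi_i\}_i$ are independent and identically distributed, with the distribution of $(X_i,\xi_i)$ (and of $C_i$) not depending on $n$, while the distribution of $\alpha_i$ may depend on $n$. $\pi_\alpha=\mathbb{P}(\alpha_i\neq0)$. With $\tilde T_i=T_i-\alpha_i$ and $\tilde\delta_i=\mathbb{1}\{\tilde T_i\le C_i\}$, $\pi_{uc}=\mathbb{P}(\tilde\delta_1=1)$. *)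

theory Defs
  imports "HOL-Probability.Probability"
begin

definition conv_in_prob :: "(nat \<Rightarrow> 'w measure) \<Rightarrow> (nat \<Rightarrow> 'w \<Rightarrow> real) \<Rightarrow> real \<Rightarrow> bool" where
  "conv_in_prob M Z c \<longleftrightarrow>
     (\<forall>e>0. (\<lambda>n. measure (M n) {w \<in> space (M n). \<bar>Z n w - c\<bar> > e}) \<longlonglongrightarrow> 0)"

definition surv_T :: "'a::euclidean_space \<Rightarrow> 'a \<Rightarrow> real \<Rightarrow> real \<Rightarrow> real" where
  "surv_T beta x a e = inner x beta + a + e"

definition cens_ind :: "'a::euclidean_space \<Rightarrow> 'a \<Rightarrow> real \<Rightarrow> real \<Rightarrow> real \<Rightarrow> real" where
  "cens_ind beta x a e c = (if surv_T beta x a e \<le> c then 1 else 0)"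

text \<open>pi_uc = P(tilde delta_1 = 1), tilde T = X^T beta + xi, computed from the
  common (n-independent) joint law D of (X_i, xi_i, C_i).\<close>
definition pi_uc :: "'a::euclidean_space \<Rightarrow> ('a \<times> real \<times> real) measure \<Rightarrow> real" where
  "pi_uc beta D = measure D {(x, e, c). inner x beta + e \<le> c}"

end

theory Submission imports Defs begin

lemma (in prob_space) sum_sq_bound:
  fixes Z :: "nat \<Rightarrow> 'a \<Rightarrow> real"
  assumes ind: "indep_vars (\<lambda>_. borel) Z I" and fin: "finite I"
   and meas: "\<And>i. i\<in>I \<Longrightarrow> Z i \<in> borel_measurable M"
   and bnd: "\<And>i w. i\<in>I \<Longrightarrow> w \<in> space M \<Longrightarrow> \<bar>Z i w\<bar> \<le> 1"
   and mean0: "\<And>i. i\<in>I \<Longrightarrow> expectation (Z i) = 0"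
  shows "expectation (\<lambda>w. (\<Sum>i\<in>I. Z i w)^2) \<le> card I"
proof -
  have int: "integrable M (Z i)" if "i\<in>I" for i
    by (rule integrable_const_bound[where B=1]) (auto intro!: AE_I2 simp: meas bnd that)
  have int2: "integrable M (\<lambda>w. Z i w * Z j w)" if "i\<in>I" "j\<in>I" for i j
    by (rule integrable_const_bound[where B=1])
      (auto intro!: AE_I2 borel_measurable_times simp: meas bnd that abs_mult mult_le_one)
  have "(\<lambda>w. (\<Sum>i\<in>I. Z i w)^2) = (\<lambda>w. \<Sum>i\<in>I. \<Sum>j\<in>I. Z i w * Z j w)"
    by (simp add: power2_eq_square sum_product)
  hence "expectation (\<lambda>w. (\<Sum>i\<in>I. Z i w)^2) = (\<Sum>i\<in>I. \<Sum>j\<in>I. expectation (\<lambda>w. Z i w * Z j w))"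
    using int2 by (simp add: Bochner_Integration.integral_sum integrable_sum)
  also have "\<dots> = (\<Sum>i\<in>I. \<Sum>j\<in>I. if j = i then expectation (\<lambda>w. Z i w * Z i w) else 0)"
  proof (intro sum.cong refl)
    fix i j assume ij: "i \<in> I" "j \<in> I"
    show "expectation (\<lambda>w. Z i w * Z j w) = (if j = i then expectation (\<lambda>w. Z i w * Z i w) else 0)"
    proof (cases "j = i")
      case False
      have "indep_vars (\<lambda>_. borel) Z {i,j}" by (rule indep_vars_subset[OF ind]) (use ij in auto)
      then have "expectation (\<lambda>w. \<Prod>k\<in>{i,j}. Z k w) = (\<Prod>k\<in>{i,j}. expectation (Z k))"
        by (intro indep_vars_lebesgue_integral) (use ij int in auto)
      then show ?thesis using False mean0 ij by simp
    qed simp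
  qed
  also have "\<dots> = (\<Sum>i\<in>I. expectation (\<lambda>w. Z i w * Z i w))"
    using fin by simp
  also have "\<dots> \<le> (\<Sum>i\<in>I. 1)"
  proof (intro sum_mono integral_le_const int2)
    fix i assume i: "i \<in> I"
    show "AE w in M. Z i w * Z i w \<le> 1"
      by (intro AE_I2) (metis abs_mult abs_le_D1 abs_ge_zero bnd i mult_le_one)
  qed auto
  finally show ?thesis by simp
qed

lemma (in prob_space) bound_n:
  fixes X :: "nat \<Rightarrow> 'a \<Rightarrow> 'b::euclidean_space" and xi alpha C :: "nat \<Rightarrow> 'a \<Rightarrow> real"
    and beta :: 'b and D :: "('b \<times> real \<times> real) measure"
  assumes meas_X: "\<And>i. X i \<in> borel_measurable M"
    and meas_xi: "\<And>i. xi i \<in> borel_measurable M"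
    and meas_alpha: "\<And>i. alpha i \<in> borel_measurable M"
    and meas_C: "\<And>i. C i \<in> borel_measurable M"
    and indep: "indep_vars (\<lambda>_. borel) (\<lambda>i w. (X i w, xi i w, C i w)) {1..n}"
    and ident: "\<And>i. i \<in> {1..n} \<Longrightarrow> distr M borel (\<lambda>w. (X i w, xi i w, C i w)) = D"
    and ident_alpha: "\<And>i. i \<in> {1..n} \<Longrightarrow> distr M borel (alpha i) = distr M borel (alpha 1)"
    and n: "n \<ge> 1" and e: "e > 0"
  shows "prob {w\<in>space M. e < \<bar>(\<Sum>i=1..n. cens_ind beta (X i w) (alpha i w) (xi i w) (C i w)) / real n - pi_uc beta D\<bar>}
     \<le> 4 / (real n * e^2) + 2 / e * prob {w\<in>space M. alpha 1 w \<noteq> 0}"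
proof -
  note [measurable] = meas_X meas_xi meas_alpha meas_C
  define p where "p = pi_uc beta D"
  define q where "q = prob {w\<in>space M. alpha 1 w \<noteq> 0}"
  define g :: "'b \<times> real \<times> real \<Rightarrow> real" where
    "g z = (if inner (fst z) beta + fst (snd z) \<le> snd (snd z) then 1 else 0)" for z
  define S where "S = {z :: 'b \<times> real \<times> real. inner (fst z) beta + fst (snd z) \<le> snd (snd z)}"
  have S_sets: "S \<in> sets borel" unfolding S_def
    by (intro borel_closed closed_Collect_le continuous_intros)
  have g_ind: "g = indicator S" by (auto simp: g_def S_def indicator_def fun_eq_iff)
  have g_meas[measurable]: "g \<in> borel_measurable borel" unfolding g_ind using S_sets by simp
  define V where "V i w = (X i w, xi i w, C i w)" for i w
  have V_meas[measurable]: "V i \<in> borel_measurable M" for i unfolding V_def by measurable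
  have sD: "sets D = sets borel" using ident[of 1] n by (auto simp flip: ident[of 1])
  have pD: "prob_space D" using ident[of 1] n prob_space_distr[OF V_meas[of 1]] by (simp add: V_def[abs_def])
  have p_eq: "p = measure D S"
    unfolding p_def pi_uc_def S_def by (intro arg_cong[where f="measure D"]) auto
  have p01: "0 \<le> p" "p \<le> 1" using p_eq prob_space.prob_le_1[OF pD] by auto
  have EY: "expectation (\<lambda>w. g (V i w)) = p" if i: "i \<in> {1..n}" for i
  proof -
    have "expectation (\<lambda>w. g (V i w)) = integral\<^sup>L (distr M borel (V i)) g"
      by (simp add: integral_distr)
    also have "\<dots> = integral\<^sup>L D g" using ident[OF i] by (simp add: V_def[abs_def])
    also have "\<dots> = measure D S" unfolding g_ind using S_sets sD by simp
    finally show ?thesis using p_eq by simp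
  qed
  define Z where "Z i w = g (V i w) - p" for i w
  have Z_meas[measurable]: "Z i \<in> borel_measurable M" for i unfolding Z_def by measurable
  have Z_ind: "indep_vars (\<lambda>_. borel) Z {1..n}"
  proof -
    have "indep_vars (\<lambda>_. borel) (\<lambda>i w. (\<lambda>z. g z - p) (V i w)) {1..n}"
      by (rule indep_vars_compose2[OF indep[folded V_def]]) measurable
    then show ?thesis by (simp add: Z_def[abs_def])
  qed
  have Zb: "\<bar>Z i w\<bar> \<le> 1" for i w using p01 by (auto simp: Z_def g_def)
  have int_g: "integrable M (\<lambda>w. g (V i w))" for i
  proof (rule integrable_const_bound[where B=1])
    show "(\<lambda>w. g (V i w)) \<in> borel_measurable M" by measurable
  qed (auto intro!: AE_I2 simp: g_def)
  have EZ: "expectation (Z i) = 0" if "i \<in> {1..n}" for i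
    using EY[OF that] int_g by (simp add: Z_def[abs_def] prob_space)
  have E2: "expectation (\<lambda>w. (\<Sum>i\<in>{1..n}. Z i w)^2) \<le> real n"
    using sum_sq_bound[OF Z_ind _ _ _ EZ] Zb by simp
  define a where "a = e * real n / 2"
  have a_pos: "a > 0" using e n by (simp add: a_def)
  have int_sq: "integrable M (\<lambda>w. (\<Sum>i\<in>{1..n}. Z i w)^2)"
  proof (rule integrable_const_bound[where B="real n ^ 2"])
    show "AE w in M. norm ((\<Sum>i\<in>{1..n}. Z i w)^2) \<le> real n ^ 2"
    proof (intro AE_I2)
      fix w
      have "\<bar>\<Sum>i\<in>{1..n}. Z i w\<bar> \<le> (\<Sum>i\<in>{1..n}. \<bar>Z i w\<bar>)" by (rule sum_abs)
      also have "\<dots> \<le> (\<Sum>i\<in>{1..n}. 1)" by (intro sum_mono Zb)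
      finally have "\<bar>\<Sum>i\<in>{1..n}. Z i w\<bar> \<le> real n" by simp
      then show "norm ((\<Sum>i\<in>{1..n}. Z i w)^2) \<le> real n ^ 2"
        using abs_le_square_iff[of "\<Sum>i\<in>{1..n}. Z i w" "real n"] by simp
    qed
  qed measurable
  have P1: "prob {w\<in>space M. a^2 \<le> (\<Sum>i\<in>{1..n}. Z i w)^2} \<le> 4 / (real n * e^2)"
  proof -
    have "prob {w\<in>space M. a^2 \<le> (\<Sum>i\<in>{1..n}. Z i w)^2}
        \<le> expectation (\<lambda>w. (\<Sum>i\<in>{1..n}. Z i w)^2) / a^2"
      by (rule integral_Markov_inequality_measure[OF int_sq]) (use a_pos in auto)
    also have "\<dots> \<le> real n / a^2" using E2 a_pos by (simp add: divide_right_mono)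
    also have "\<dots> = 4 / (real n * e^2)" using n e by (simp add: a_def field_simps power2_eq_square)
    finally show ?thesis .
  qed
  define A where "A i w = (if alpha i w \<noteq> 0 then 1 else (0::real))" for i w
  have A_meas[measurable]: "A i \<in> borel_measurable M" for i unfolding A_def by measurable
  have int_A: "integrable M (A i)" for i
    by (rule integrable_const_bound[where B=1]) (auto intro!: AE_I2 simp: A_def)
  have EA: "expectation (A i) = q" if i: "i \<in> {1..n}" for i
  proof -
    have sb: "{x::real. x \<noteq> 0} \<in> sets borel" by measurable
    have "expectation (A i) = prob {w\<in>space M. alpha i w \<noteq> 0}"
    proof -
      have ms: "{w\<in>space M. alpha i w \<noteq> 0} \<in> sets M" by measurable
      have "expectation (A i) = expectation (indicator {w\<in>space M. alpha i w \<noteq> 0})"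
        by (intro Bochner_Integration.integral_cong) (auto simp: A_def indicator_def)
      then show ?thesis using ms by simp
    qed
    also have "\<dots> = measure (distr M borel (alpha i)) {x. x \<noteq> 0}"
      by (subst measure_distr) (auto intro!: arg_cong[where f=prob])
    also have "\<dots> = measure (distr M borel (alpha 1)) {x. x \<noteq> 0}" using ident_alpha[OF i] by simp
    also have "\<dots> = q" unfolding q_def
      by (subst measure_distr) (auto intro!: arg_cong[where f=prob])
    finally show ?thesis .
  qed
  have P2: "prob {w\<in>space M. a \<le> (\<Sum>i\<in>{1..n}. A i w)} \<le> 2 / e * q"
  proof -
    have "integrable M (\<lambda>w. \<Sum>i\<in>{1..n}. A i w)" using int_A by auto
    then have "prob {w\<in>space M. a \<le> (\<Sum>i\<in>{1..n}. A i w)} \<le> expectation (\<lambda>w. \<Sum>i\<in>{1..n}. A i w) / a"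
      by (rule integral_Markov_inequality_measure) (use a_pos int_A in \<open>auto intro!: AE_I2 sum_nonneg simp: A_def\<close>)
    also have "expectation (\<lambda>w. \<Sum>i\<in>{1..n}. A i w) = real n * q"
      using int_A EA by (simp add: Bochner_Integration.integral_sum)
    also have "real n * q / a = 2 / e * q" using n e by (simp add: a_def field_simps)
    finally show ?thesis .
  qed
  have incl: "{w\<in>space M. e < \<bar>(\<Sum>i=1..n. cens_ind beta (X i w) (alpha i w) (xi i w) (C i w)) / real n - pi_uc beta D\<bar>}
     \<subseteq> {w\<in>space M. a^2 \<le> (\<Sum>i\<in>{1..n}. Z i w)^2} \<union> {w\<in>space M. a \<le> (\<Sum>i\<in>{1..n}. A i w)}"
  proof (intro subsetI)
    fix w assume "w \<in> {w\<in>space M. e < \<bar>(\<Sum>i=1..n. cens_ind beta (X i w) (alpha i w) (xi i w) (C i w)) / real n - pi_uc beta D\<bar>}"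
    then have w: "w \<in> space M" and ew: "e < \<bar>(\<Sum>i=1..n. cens_ind beta (X i w) (alpha i w) (xi i w) (C i w)) / real n - p\<bar>"
      by (auto simp: p_def)
    define Sd where "Sd = (\<Sum>i=1..n. cens_ind beta (X i w) (alpha i w) (xi i w) (C i w))"
    define SY where "SY = (\<Sum>i=1..n. g (V i w))"
    define SZ where "SZ = (\<Sum>i\<in>{1..n}. Z i w)"
    define SA where "SA = (\<Sum>i\<in>{1..n}. A i w)"
    have "\<bar>Sd - SY\<bar> = \<bar>\<Sum>i=1..n. cens_ind beta (X i w) (alpha i w) (xi i w) (C i w) - g (V i w)\<bar>"
      by (simp add: Sd_def SY_def sum_subtractf)
    also have "\<dots> \<le> (\<Sum>i=1..n. \<bar>cens_ind beta (X i w) (alpha i w) (xi i w) (C i w) - g (V i w)\<bar>)"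
      by (rule sum_abs)
    also have "\<dots> \<le> SA" unfolding SA_def
      by (intro sum_mono) (auto simp: cens_ind_def surv_T_def g_def V_def A_def)
    finally have d: "\<bar>Sd - SY\<bar> \<le> SA" .
    have z: "SZ = SY - real n * p"
      by (simp add: SZ_def SY_def Z_def sum_subtractf)
    have "e * real n < \<bar>Sd / real n - p\<bar> * real n" using ew n by (simp add: Sd_def)
    also have "\<bar>Sd / real n - p\<bar> * real n = \<bar>Sd - real n * p\<bar>"
      using n by (simp add: field_simps abs_mult[symmetric])
    finally have "e * real n < \<bar>(Sd - SY) + SZ\<bar>" using z by simp
    then have "e * real n < SA + \<bar>SZ\<bar>" using d by linarith
    then have "a \<le> SA \<or> a \<le> \<bar>SZ\<bar>" unfolding a_def by linarith
    moreover have "a \<le> \<bar>SZ\<bar> \<Longrightarrow> a^2 \<le> SZ^2"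
      using a_pos abs_le_square_iff[of a SZ] by simp
    ultimately show "w \<in> {w\<in>space M. a^2 \<le> (\<Sum>i\<in>{1..n}. Z i w)^2} \<union> {w\<in>space M. a \<le> (\<Sum>i\<in>{1..n}. A i w)}"
      using w by (auto simp: SA_def SZ_def)
  qed
  have "prob {w\<in>space M. e < \<bar>(\<Sum>i=1..n. cens_ind beta (X i w) (alpha i w) (xi i w) (C i w)) / real n - pi_uc beta D\<bar>}
     \<le> prob ({w\<in>space M. a^2 \<le> (\<Sum>i\<in>{1..n}. Z i w)^2} \<union> {w\<in>space M. a \<le> (\<Sum>i\<in>{1..n}. A i w)})"
    by (rule finite_measure_mono[OF incl]) measurable
  also have "\<dots> \<le> prob {w\<in>space M. a^2 \<le> (\<Sum>i\<in>{1..n}. Z i w)^2} + prob {w\<in>space M. a \<le> (\<Sum>i\<in>{1..n}. A i w)}"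
    by (rule measure_Un_le) measurable
  finally show ?thesis using P1 P2 unfolding q_def by linarith
qed

theorem lemma2:
  fixes M :: "nat \<Rightarrow> 'w measure"
    and X :: "nat \<Rightarrow> nat \<Rightarrow> 'w \<Rightarrow> 'a::euclidean_space"
    and xi alpha C :: "nat \<Rightarrow> nat \<Rightarrow> 'w \<Rightarrow> real"
    and beta :: 'a
    and D :: "('a \<times> real \<times> real) measure"
  assumes prob: "\<And>n. prob_space (M n)"
    and meas_X: "\<And>n i. X n i \<in> borel_measurable (M n)"
    and meas_xi: "\<And>n i. xi n i \<in> borel_measurable (M n)"
    and meas_alpha: "\<And>n i. alpha n i \<in> borel_measurable (M n)"
    and meas_C: "\<And>n i. C n i \<in> borel_measurable (M n)"
    and indep: "\<And>n. prob_space.indep_vars (M n) (\<lambda>_. borel)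
                    (\<lambda>i w. (X n i w, xi n i w, C n i w)) {1..n}"
    and ident: "\<And>n i. i \<in> {1..n} \<Longrightarrow>
                    distr (M n) borel (\<lambda>w. (X n i w, xi n i w, C n i w)) = D"
    and ident_alpha: "\<And>n i. i \<in> {1..n} \<Longrightarrow>
                    distr (M n) borel (alpha n i) = distr (M n) borel (alpha n 1)"
    and pi_alpha_0: "(\<lambda>n. measure (M n) {w \<in> space (M n). alpha n 1 w \<noteq> 0}) \<longlonglongrightarrow> 0"
  shows "conv_in_prob M
           (\<lambda>n w. (\<Sum>i=1..n. cens_ind beta (X n i w) (alpha n i w) (xi n i w) (C n i w)) / real n)
           (pi_uc beta D)"
proof -
  show ?thesis unfolding conv_in_prob_def
  proof (intro allI impI)
    fix e :: real assume e: "e > 0"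
    define q where "q n = measure (M n) {w \<in> space (M n). alpha n 1 w \<noteq> 0}" for n
    have ev: "eventually (\<lambda>n. measure (M n) {w \<in> space (M n). e < \<bar>(\<Sum>i=1..n. cens_ind beta (X n i w) (alpha n i w) (xi n i w) (C n i w)) / real n - pi_uc beta D\<bar>}
       \<le> 4 / (real n * e^2) + 2 / e * q n) sequentially"
      unfolding eventually_sequentially
    proof (intro exI[of _ 1] allI impI)
      fix n :: nat assume n: "n \<ge> 1"
      show "measure (M n) {w \<in> space (M n). e < \<bar>(\<Sum>i=1..n. cens_ind beta (X n i w) (alpha n i w) (xi n i w) (C n i w)) / real n - pi_uc beta D\<bar>}
       \<le> 4 / (real n * e^2) + 2 / e * q n"
        unfolding q_def
        by (rule prob_space.bound_n[where M="M n" and X="X n" and xi="xi n" and alpha="alpha n" and C="C n" and n=n and D=D and beta=beta and e=e,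
              OF prob[of n] meas_X[of n] meas_xi[of n] meas_alpha[of n] meas_C[of n] indep[of n] ident[where n=n] ident_alpha[where n=n] n e])
    qed
    have lim: "(\<lambda>n. 4 / (real n * e^2) + 2 / e * q n) \<longlonglongrightarrow> 0"
    proof -
      have "(\<lambda>n. 4 / e^2 * inverse (real n)) \<longlonglongrightarrow> 4 / e^2 * 0"
        by (intro tendsto_mult tendsto_const tendsto_inverse_0_at_top filterlim_real_sequentially)
      moreover have "(\<lambda>n. 2 / e * q n) \<longlonglongrightarrow> 2 / e * 0"
        using pi_alpha_0 unfolding q_def by (intro tendsto_mult tendsto_const)
      ultimately have "(\<lambda>n. 4 / e^2 * inverse (real n) + 2 / e * q n) \<longlonglongrightarrow> 4 / e^2 * 0 + 2 / e * 0"
        by (rule tendsto_add)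
      then show ?thesis by (simp add: field_simps)
    qed
    show "(\<lambda>n. measure (M n) {w \<in> space (M n). e < \<bar>(\<Sum>i=1..n. cens_ind beta (X n i w) (alpha n i w) (xi n i w) (C n i w)) / real n - pi_uc beta D\<bar>}) \<longlonglongrightarrow> 0"
      by (rule tendsto_sandwich[OF _ ev tendsto_const lim]) simp
  qed
qed

end
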